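(* Let $r\ge 2$ and $m$ be integers with $3\le m\le 6$. Then for every integer $n\ge m-1$, $$F_{n+2,r}\equiv F_{n,r}\pmod{2^m},$$ i.e. from the term of index $m-1$ onward the sequence $(F_{n,r}\bmod 2^m)_{n\ge0}$ is periodic with period $2$.
   Context: For positive integers $r\le m\le n$, $S_r(n,m)$ denotes the $r$-Stirling number of the second kind: the number of partitions of $\{1,\dots,n\}$ into $m$ non-empty blocks such that $1,\dots,r$ lie in pairwise distinct blocks. For a positive integer $r$ and integer $n\ge 0$, the $r$-Fubini number is $F_{n,r}=\sum_{k=0}^{n}(k+r)!\,S_r(n+r,k+r)$. *)

theory Defs
  imports Main "HOL-Library.Disjoint_Sets"
begin

definition r_stirling :: "nat \<Rightarrow> nat \<Rightarrow> nat \<Rightarrow> nat" where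
  "r_stirling r n m = card {P. partition_on {1..n} P \<and> card P = m \<and>
      (\<forall>B\<in>P. \<forall>i\<in>{1..r}. \<forall>j\<in>{1..r}. i \<in> B \<and> j \<in> B \<longrightarrow> i = j)}"

definition r_fubini :: "nat \<Rightarrow> nat \<Rightarrow> nat" where
  "r_fubini n r = (\<Sum>k=0..n. fact (k + r) * r_stirling r (n + r) (k + r))"

end

theory Submission imports Defs begin

definition QR :: "'a set \<Rightarrow> 'a set set \<Rightarrow> bool" where
  "QR R P = (\<forall>B\<in>P. \<forall>i\<in>R. \<forall>j\<in>R. i \<in> B \<and> j \<in> B \<longrightarrow> i = j)"
definition TT :: "'a set \<Rightarrow> 'a set \<Rightarrow> nat \<Rightarrow> 'a set set set" where
  "TT R U k = {P. partition_on U P \<and> card P = k \<and> QR R P}"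

lemma r_stirling_TT: "r_stirling r n m = card (TT {1..r} {1..n} m)"
  unfolding r_stirling_def TT_def QR_def by simp

lemma TT_finite: "finite U \<Longrightarrow> finite (TT R U k)"
  unfolding TT_def by (rule finite_subset[OF _ finitely_many_partition_on]) auto

lemma X1_bij:
  assumes U: "finite U" and x: "x \<notin> U"
  shows "bij_betw (insert {x}) (TT R U k) {P \<in> TT R (insert x U) (Suc k). {x} \<in> P}"
proof (rule bij_betw_byWitness[where f'="\<lambda>P. P - {{x}}"])
  show "\<forall>a\<in>TT R U k. insert {x} a - {{x}} = a"
    using x by (auto simp: TT_def partition_on_def)
  show "\<forall>a'\<in>{P \<in> TT R (insert x U) (Suc k). {x} \<in> P}. insert {x} (a' - {{x}}) = a'"
    by auto
  show "insert {x} ` TT R U k \<subseteq> {P \<in> TT R (insert x U) (Suc k). {x} \<in> P}"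
  proof safe
    fix P assume P: "P \<in> TT R U k"
    hence part: "partition_on U P" and c: "card P = k" and q: "QR R P" by (auto simp: TT_def)
    have fin: "finite P" using finite_elements[OF U part] .
    have nx: "{x} \<notin> P" using part x by (auto simp: partition_on_def)
    have "partition_on (insert x U) (insert {x} P)"
      using part x by (subst partition_on_insert) (auto simp: partition_on_def disjnt_def)
    moreover have "card (insert {x} P) = Suc k" using fin nx c by simp
    moreover have "QR R (insert {x} P)" using q by (auto simp: QR_def)
    ultimately show "insert {x} P \<in> TT R (insert x U) (Suc k)" by (simp add: TT_def)
  qed
  show "(\<lambda>P. P - {{x}}) ` {P \<in> TT R (insert x U) (Suc k). {x} \<in> P} \<subseteq> TT R U k"
  proof safe
    fix P assume P: "P \<in> TT R (insert x U) (Suc k)" and xP: "{x} \<in> P"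
    hence part: "partition_on (insert x U) P" and c: "card P = Suc k" and q: "QR R P" by (auto simp: TT_def)
    have fin: "finite P" using finite_elements[OF _ part] U by simp
    have eq: "P = insert {x} (P - {{x}})" using xP by auto
    have blk: "B = {x}" if B: "B\<in>P" "x\<in>B" for B
    proof (rule ccontr)
      assume "B \<noteq> {x}"
      from disjointD[OF partition_onD2[OF part] B(1) xP this] B(2) show False by auto
    qed
    have d: "disjnt {x} (\<Union>(P - {{x}}))" using blk
      by (auto simp: disjnt_def)
    have "partition_on (insert x U - {x}) (P - {{x}})"
      using part eq partition_on_insert[OF d, of "insert x U"] by simp
    hence "partition_on U (P - {{x}})" using x by simp
    moreover have "card (P - {{x}}) = k" using fin c xP by simp
    moreover have "QR R (P - {{x}})" using q by (auto simp: QR_def)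
    ultimately show "P - {{x}} \<in> TT R U k" by (simp add: TT_def)
  qed
qed

lemma part_blocks:
  assumes "partition_on U P" "B \<in> P"
  shows "B \<subseteq> U" "B \<noteq> {}"
  using assms by (auto simp: partition_on_def)

lemma part_dC:
  assumes "partition_on U P" "C \<in> P"
  shows "disjnt C (\<Union>(P - {C}))"
proof -
  have "C \<inter> D = {}" if "D \<in> P - {C}" for D
    using disjointD[OF partition_onD2[OF assms(1)] assms(2), of D] that by auto
  thus ?thesis by (auto simp: disjnt_def)
qed

lemma X2_bij:
  assumes U: "finite U" and x: "x \<notin> U" and xR: "x \<notin> R"
  shows "bij_betw (\<lambda>(P,C). insert (insert x C) (P - {C})) (Sigma (TT R U k) (\<lambda>P. P))
          {P \<in> TT R (insert x U) k. {x} \<notin> P}"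
  unfolding bij_betw_def
proof (intro conjI)
  let ?f = "\<lambda>(P,C). insert (insert x C) (P - {C})"
  show "inj_on ?f (Sigma (TT R U k) (\<lambda>P. P))"
  proof (rule inj_onI, clarify)
    fix P1 C1 P2 C2
    assume P1: "P1 \<in> TT R U k" and C1: "C1 \<in> P1" and P2: "P2 \<in> TT R U k" and C2: "C2 \<in> P2"
      and eq: "insert (insert x C1) (P1 - {C1}) = insert (insert x C2) (P2 - {C2})"
    have p1: "partition_on U P1" and p2: "partition_on U P2" using P1 P2 by (auto simp: TT_def)
    have nx1: "\<And>B. B \<in> P1 \<Longrightarrow> x \<notin> B" using part_blocks(1)[OF p1] x by blast
    have nx2: "\<And>B. B \<in> P2 \<Longrightarrow> x \<notin> B" using part_blocks(1)[OF p2] x by blast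
    have "insert x C1 \<in> insert (insert x C2) (P2 - {C2})" using eq by blast
    hence "insert x C1 = insert x C2" using nx2 by blast
    hence c: "C1 = C2" using nx1[OF C1] nx2[OF C2] by (metis insert_ident)
    have "P1 - {C1} = P2 - {C1}"
    proof -
      have "P1 - {C1} = insert (insert x C1) (P1 - {C1}) - {insert x C1}" using nx1 by auto
      also have "\<dots> = insert (insert x C1) (P2 - {C1}) - {insert x C1}" using eq c by simp
      also have "\<dots> = P2 - {C1}" using nx2 by auto
      finally show ?thesis .
    qed
    hence "P1 = P2" using C1 C2 c by blast
    thus "P1 = P2 \<and> C1 = C2" using c by simp
  qed
  show "?f ` Sigma (TT R U k) (\<lambda>P. P) = {P \<in> TT R (insert x U) k. {x} \<notin> P}"
  proof (rule equalityI)
   show "?f ` Sigma (TT R U k) (\<lambda>P. P) \<subseteq> {P \<in> TT R (insert x U) k. {x} \<notin> P}"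
   proof (rule image_subsetI)
    fix pc assume "pc \<in> Sigma (TT R U k) (\<lambda>P. P)"
    then obtain P C where pc: "pc = (P,C)" and P: "P \<in> TT R U k" and C: "C \<in> P" by blast
    have p: "partition_on U P" and c: "card P = k" and q: "QR R P" using P by (auto simp: TT_def)
    have fin: "finite P" using finite_elements[OF U p] .
    have nx: "\<And>B. B \<in> P \<Longrightarrow> x \<notin> B" using part_blocks(1)[OF p] x by blast
    have dC: "disjnt C (\<Union>(P - {C}))" by (rule part_dC[OF p C])
    have PC: "P = insert C (P - {C})" using C by auto
    have p': "partition_on (U - C) (P - {C})" and CU: "C \<subseteq> U" and Cne: "C \<noteq> {}"
      using partition_on_insert[OF dC, of U] p PC by auto
    have dxC: "disjnt (insert x C) (\<Union>(P - {C}))" using dC nx by (auto simp: disjnt_def)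
    have "partition_on (insert x U) (insert (insert x C) (P - {C}))"
      using partition_on_insert[OF dxC, of "insert x U"] p' CU x
      by (simp add: insert_Diff_if) blast
    moreover have "card (insert (insert x C) (P - {C})) = k"
    proof -
      have "insert x C \<notin> P - {C}" using nx by auto
      hence "card (insert (insert x C) (P - {C})) = Suc (card (P - {C}))" using fin by simp
      also have "\<dots> = card P" using card_Suc_Diff1[OF fin C] .
      finally show ?thesis using c by simp
    qed
    moreover have "QR R (insert (insert x C) (P - {C}))" using q C xR by (auto simp: QR_def)
    moreover have "{x} \<notin> insert (insert x C) (P - {C})" using nx[OF C] Cne nx by auto
    ultimately show "?f pc \<in> {P \<in> TT R (insert x U) k. {x} \<notin> P}" unfolding pc by (simp add: TT_def)
   qed
  next
   show "{P \<in> TT R (insert x U) k. {x} \<notin> P} \<subseteq> ?f ` Sigma (TT R U k) (\<lambda>P. P)"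
   proof (rule subsetI)
    fix Q assume "Q \<in> {P \<in> TT R (insert x U) k. {x} \<notin> P}"
    hence Q: "Q \<in> TT R (insert x U) k" and xQ: "{x} \<notin> Q" by auto
    have p: "partition_on (insert x U) Q" and c: "card Q = k" and q: "QR R Q" using Q by (auto simp: TT_def)
    have fin: "finite Q" using finite_elements[OF _ p] U by simp
    obtain B where B: "B \<in> Q" "x \<in> B" using partition_onD1[OF p] by blast
    define C where "C = B - {x}"
    have Bx: "B \<noteq> {x}" using xQ B by auto
    have Cne: "C \<noteq> {}" using Bx B(2) by (auto simp: C_def)
    have dB: "disjnt B (\<Union>(Q - {B}))" by (rule part_dC[OF p B(1)])
    have QB: "Q = insert B (Q - {B})" using B by auto
    have p': "partition_on (insert x U - B) (Q - {B})" and BU: "B \<subseteq> insert x U"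
      using partition_on_insert[OF dB, of "insert x U"] p QB by auto
    have CQ: "C \<notin> Q - {B}"
    proof
      assume "C \<in> Q - {B}"
      hence "C \<inter> B = {}" using disjointD[OF partition_onD2[OF p], of C B] B by auto
      thus False using Cne by (auto simp: C_def)
    qed
    define P where "P = insert C (Q - {B})"
    have dC: "disjnt C (\<Union>(Q - {B}))" using dB by (auto simp: C_def disjnt_def)
    have UC: "U - C = insert x U - B" using x B(2) by (auto simp: C_def)
    have CU: "C \<subseteq> U" using BU by (auto simp: C_def)
    have "partition_on U P"
      unfolding P_def using partition_on_insert[OF dC, of U] p' UC CU Cne by simp
    moreover have "card P = k" unfolding P_def
      using CQ fin c card_Suc_Diff1[OF fin B(1)] by simp
    moreover have "QR R P" using q B(1) unfolding P_def QR_def C_def by blast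
    ultimately have PT: "P \<in> TT R U k" by (simp add: TT_def)
    have CP: "C \<in> P" by (simp add: P_def)
    have "?f (P, C) = Q"
    proof -
      have "insert x C = B" using B(2) by (auto simp: C_def)
      moreover have "P - {C} = Q - {B}" using CQ by (auto simp: P_def)
      ultimately show ?thesis using QB by simp
    qed
    thus "Q \<in> ?f ` Sigma (TT R U k) (\<lambda>P. P)" using PT CP by force
   qed
  qed
qed

lemma TT_rec:
  assumes U: "finite U" and x: "x \<notin> U" and xR: "x \<notin> R"
  shows "card (TT R (insert x U) (Suc k)) = card (TT R U k) + Suc k * card (TT R U (Suc k))"
proof -
  let ?A = "TT R (insert x U) (Suc k)"
  have fin: "finite ?A" using TT_finite U by blast
  have "?A = {P \<in> ?A. {x} \<in> P} \<union> {P \<in> ?A. {x} \<notin> P}" by auto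
  hence "card ?A = card {P \<in> ?A. {x} \<in> P} + card {P \<in> ?A. {x} \<notin> P}"
    using fin by (metis (no_types, lifting) card_Un_disjoint disjoint_iff finite_Un mem_Collect_eq)
  also have "card {P \<in> ?A. {x} \<in> P} = card (TT R U k)"
    using bij_betw_same_card[OF X1_bij[OF U x]] by simp
  also have "card {P \<in> ?A. {x} \<notin> P} = card (Sigma (TT R U (Suc k)) (\<lambda>P. P))"
    using bij_betw_same_card[OF X2_bij[OF U x xR]] by simp
  also have "\<dots> = (\<Sum>P\<in>TT R U (Suc k). card P)"
    by (rule card_SigmaI) (use TT_finite[OF U] finite_elements[OF U] in \<open>auto simp: TT_def\<close>)
  also have "\<dots> = (\<Sum>P\<in>TT R U (Suc k). Suc k)" by (rule sum.cong) (auto simp: TT_def)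
  also have "\<dots> = Suc k * card (TT R U (Suc k))" by simp
  finally show ?thesis .
qed

lemma TT_base:
  assumes R: "finite R"
  shows "card (TT R R k) = (if k = card R then 1 else 0)"
proof -
  have "TT R R k \<subseteq> {(\<lambda>i. {i}) ` R}"
  proof
    fix P assume P: "P \<in> TT R R k"
    hence p: "partition_on R P" and q: "QR R P" by (auto simp: TT_def)
    have "P = (\<lambda>i. {i}) ` R"
    proof (rule equalityI)
      show "P \<subseteq> (\<lambda>i. {i}) ` R"
      proof
        fix B assume B: "B \<in> P"
        obtain i where i: "i \<in> B" using part_blocks(2)[OF p B] by blast
        have "B = {i}" using i part_blocks(1)[OF p B] q B unfolding QR_def by blast
        thus "B \<in> (\<lambda>i. {i}) ` R" using i part_blocks(1)[OF p B] by blast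
      qed
      show "(\<lambda>i. {i}) ` R \<subseteq> P"
      proof
        fix B assume "B \<in> (\<lambda>i. {i}) ` R"
        then obtain i where i: "i \<in> R" "B = {i}" by blast
        obtain C where C: "C \<in> P" "i \<in> C" using partition_onD1[OF p] i by blast
        have "C = {i}" using C part_blocks(1)[OF p C(1)] q unfolding QR_def by blast
        thus "B \<in> P" using C i by simp
      qed
    qed
    thus "P \<in> {(\<lambda>i. {i}) ` R}" by simp
  qed
  moreover have cs: "card ((\<lambda>i. {i}) ` R) = card R" by (rule card_image) (auto simp: inj_on_def)
  moreover have "k = card R \<Longrightarrow> (\<lambda>i. {i}) ` R \<in> TT R R k"
    using cs by (auto simp: TT_def QR_def partition_on_singletons)
  ultimately have "TT R R k = (if k = card R then {(\<lambda>i. {i}) ` R} else {})"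
    unfolding TT_def by auto
  thus ?thesis by simp
qed

lemma TT_zero:
  assumes "finite U" "U \<noteq> {}"
  shows "TT R U 0 = {}"
  using assms by (auto simp: TT_def partition_on_def finite_elements card_eq_0_iff)

definition step :: "nat \<Rightarrow> nat list \<Rightarrow> nat list" where
  "step M s = [0, 1 * (s!1 + s!0) mod M, 2 * (s!2 + s!1) mod M, 3 * (s!3 + s!2) mod M,
     4 * (s!4 + s!3) mod M, 5 * (s!5 + s!4) mod M, 6 * (s!6 + s!5) mod M, 7 * (s!7 + s!6) mod M]"

fun st :: "nat \<Rightarrow> nat \<Rightarrow> nat \<Rightarrow> nat list" where
  "st M r 0 = map (\<lambda>j. if j = r then fact r mod M else 0) [0,1,2,3,4,5,6,7]"
| "st M r (Suc n) = step M (st M r n)"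
lemma st_num: "n > 0 \<Longrightarrow> st M r n = step M (st M r (n - 1))"
  by (cases n) auto
lemma st_2_0: "st 64 2 0 = [0, 0, 2, 0, 0, 0, 0, 0]" by (simp add: fact_numeral)
lemma st_2_1: "st 64 2 1 = [0, 0, 4, 6, 0, 0, 0, 0]" by (subst st_num) (simp_all add: st_2_0 step_def del: st.simps)
lemma st_2_2: "st 64 2 2 = [0, 0, 8, 30, 24, 0, 0, 0]" by (subst st_num) (simp_all add: st_2_1[unfolded One_nat_def] step_def del: st.simps)
lemma st_2_3: "st 64 2 3 = [0, 0, 16, 50, 24, 56, 0, 0]" by (subst st_num) (simp_all add: st_2_2 step_def del: st.simps)
lemma st_2_4: "st 64 2 4 = [0, 0, 32, 6, 40, 16, 16, 0]" by (subst st_num) (simp_all add: st_2_3 step_def del: st.simps)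
lemma st_2_5: "st 64 2 5 = [0, 0, 0, 50, 56, 24, 0, 48]" by (subst st_num) (simp_all add: st_2_4 step_def del: st.simps)
lemma st_2_6: "st 64 2 6 = [0, 0, 0, 22, 40, 16, 16, 16]" by (subst st_num) (simp_all add: st_2_5 step_def del: st.simps)
lemma st_2_7: "st 64 2 7 = [0, 0, 0, 2, 56, 24, 0, 32]" by (subst st_num) (simp_all add: st_2_6 step_def del: st.simps)
lemma st_2_8: "st 64 2 8 = [0, 0, 0, 6, 40, 16, 16, 32]" by (subst st_num) (simp_all add: st_2_7 step_def del: st.simps)
lemma st_2_9: "st 64 2 9 = [0, 0, 0, 18, 56, 24, 0, 16]" by (subst st_num) (simp_all add: st_2_8 step_def del: st.simps)
lemma st_2_10: "st 64 2 10 = [0, 0, 0, 54, 40, 16, 16, 48]" by (subst st_num) (simp_all add: st_2_9 step_def del: st.simps)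
lemma st_2_11: "st 64 2 11 = [0, 0, 0, 34, 56, 24, 0, 0]" by (subst st_num) (simp_all add: st_2_10 step_def del: st.simps)
lemma st_2_12: "st 64 2 12 = [0, 0, 0, 38, 40, 16, 16, 0]" by (subst st_num) (simp_all add: st_2_11 step_def del: st.simps)
lemma st_2_13: "st 64 2 13 = [0, 0, 0, 50, 56, 24, 0, 48]" by (subst st_num) (simp_all add: st_2_12 step_def del: st.simps)
lemma st_2_14: "st 64 2 14 = [0, 0, 0, 22, 40, 16, 16, 16]" by (subst st_num) (simp_all add: st_2_13 step_def del: st.simps)
lemma st_2_15: "st 64 2 15 = [0, 0, 0, 2, 56, 24, 0, 32]" by (subst st_num) (simp_all add: st_2_14 step_def del: st.simps)
lemma st_3_0: "st 64 3 0 = [0, 0, 0, 6, 0, 0, 0, 0]" by (simp add: fact_numeral)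
lemma st_3_1: "st 64 3 1 = [0, 0, 0, 18, 24, 0, 0, 0]" by (subst st_num) (simp_all add: st_3_0 step_def del: st.simps)
lemma st_3_2: "st 64 3 2 = [0, 0, 0, 54, 40, 56, 0, 0]" by (subst st_num) (simp_all add: st_3_1[unfolded One_nat_def] step_def del: st.simps)
lemma st_3_3: "st 64 3 3 = [0, 0, 0, 34, 56, 32, 16, 0]" by (subst st_num) (simp_all add: st_3_2 step_def del: st.simps)
lemma st_3_4: "st 64 3 4 = [0, 0, 0, 38, 40, 56, 32, 48]" by (subst st_num) (simp_all add: st_3_3 step_def del: st.simps)
lemma st_3_5: "st 64 3 5 = [0, 0, 0, 50, 56, 32, 16, 48]" by (subst st_num) (simp_all add: st_3_4 step_def del: st.simps)
lemma st_3_6: "st 64 3 6 = [0, 0, 0, 22, 40, 56, 32, 0]" by (subst st_num) (simp_all add: st_3_5 step_def del: st.simps)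
lemma st_3_7: "st 64 3 7 = [0, 0, 0, 2, 56, 32, 16, 32]" by (subst st_num) (simp_all add: st_3_6 step_def del: st.simps)
lemma st_3_8: "st 64 3 8 = [0, 0, 0, 6, 40, 56, 32, 16]" by (subst st_num) (simp_all add: st_3_7 step_def del: st.simps)
lemma st_3_9: "st 64 3 9 = [0, 0, 0, 18, 56, 32, 16, 16]" by (subst st_num) (simp_all add: st_3_8 step_def del: st.simps)
lemma st_3_10: "st 64 3 10 = [0, 0, 0, 54, 40, 56, 32, 32]" by (subst st_num) (simp_all add: st_3_9 step_def del: st.simps)
lemma st_3_11: "st 64 3 11 = [0, 0, 0, 34, 56, 32, 16, 0]" by (subst st_num) (simp_all add: st_3_10 step_def del: st.simps)
lemma st_3_12: "st 64 3 12 = [0, 0, 0, 38, 40, 56, 32, 48]" by (subst st_num) (simp_all add: st_3_11 step_def del: st.simps)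
lemma st_3_13: "st 64 3 13 = [0, 0, 0, 50, 56, 32, 16, 48]" by (subst st_num) (simp_all add: st_3_12 step_def del: st.simps)
lemma st_3_14: "st 64 3 14 = [0, 0, 0, 22, 40, 56, 32, 0]" by (subst st_num) (simp_all add: st_3_13 step_def del: st.simps)
lemma st_3_15: "st 64 3 15 = [0, 0, 0, 2, 56, 32, 16, 32]" by (subst st_num) (simp_all add: st_3_14 step_def del: st.simps)
lemma st_4_0: "st 64 4 0 = [0, 0, 0, 0, 24, 0, 0, 0]" by (simp add: fact_numeral)
lemma st_4_1: "st 64 4 1 = [0, 0, 0, 0, 32, 56, 0, 0]" by (subst st_num) (simp_all add: st_4_0 step_def del: st.simps)
lemma st_4_2: "st 64 4 2 = [0, 0, 0, 0, 0, 56, 16, 0]" by (subst st_num) (simp_all add: st_4_1[unfolded One_nat_def] step_def del: st.simps)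
lemma st_4_3: "st 64 4 3 = [0, 0, 0, 0, 0, 24, 48, 48]" by (subst st_num) (simp_all add: st_4_2 step_def del: st.simps)
lemma st_4_4: "st 64 4 4 = [0, 0, 0, 0, 0, 56, 48, 32]" by (subst st_num) (simp_all add: st_4_3 step_def del: st.simps)
lemma st_4_5: "st 64 4 5 = [0, 0, 0, 0, 0, 24, 48, 48]" by (subst st_num) (simp_all add: st_4_4 step_def del: st.simps)
lemma st_4_6: "st 64 4 6 = [0, 0, 0, 0, 0, 56, 48, 32]" by (subst st_num) (simp_all add: st_4_5 step_def del: st.simps)
lemma st_4_7: "st 64 4 7 = [0, 0, 0, 0, 0, 24, 48, 48]" by (subst st_num) (simp_all add: st_4_6 step_def del: st.simps)
lemma st_4_8: "st 64 4 8 = [0, 0, 0, 0, 0, 56, 48, 32]" by (subst st_num) (simp_all add: st_4_7 step_def del: st.simps)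
lemma st_4_9: "st 64 4 9 = [0, 0, 0, 0, 0, 24, 48, 48]" by (subst st_num) (simp_all add: st_4_8 step_def del: st.simps)
lemma st_4_10: "st 64 4 10 = [0, 0, 0, 0, 0, 56, 48, 32]" by (subst st_num) (simp_all add: st_4_9 step_def del: st.simps)
lemma st_4_11: "st 64 4 11 = [0, 0, 0, 0, 0, 24, 48, 48]" by (subst st_num) (simp_all add: st_4_10 step_def del: st.simps)
lemma st_4_12: "st 64 4 12 = [0, 0, 0, 0, 0, 56, 48, 32]" by (subst st_num) (simp_all add: st_4_11 step_def del: st.simps)
lemma st_4_13: "st 64 4 13 = [0, 0, 0, 0, 0, 24, 48, 48]" by (subst st_num) (simp_all add: st_4_12 step_def del: st.simps)
lemma st_4_14: "st 64 4 14 = [0, 0, 0, 0, 0, 56, 48, 32]" by (subst st_num) (simp_all add: st_4_13 step_def del: st.simps)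
lemma st_4_15: "st 64 4 15 = [0, 0, 0, 0, 0, 24, 48, 48]" by (subst st_num) (simp_all add: st_4_14 step_def del: st.simps)
lemma st_5_0: "st 64 5 0 = [0, 0, 0, 0, 0, 56, 0, 0]" by (simp add: fact_numeral)
lemma st_5_1: "st 64 5 1 = [0, 0, 0, 0, 0, 24, 16, 0]" by (subst st_num) (simp_all add: st_5_0 step_def del: st.simps)
lemma st_5_2: "st 64 5 2 = [0, 0, 0, 0, 0, 56, 48, 48]" by (subst st_num) (simp_all add: st_5_1[unfolded One_nat_def] step_def del: st.simps)
lemma st_5_3: "st 64 5 3 = [0, 0, 0, 0, 0, 24, 48, 32]" by (subst st_num) (simp_all add: st_5_2 step_def del: st.simps)
lemma st_5_4: "st 64 5 4 = [0, 0, 0, 0, 0, 56, 48, 48]" by (subst st_num) (simp_all add: st_5_3 step_def del: st.simps)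
lemma st_5_5: "st 64 5 5 = [0, 0, 0, 0, 0, 24, 48, 32]" by (subst st_num) (simp_all add: st_5_4 step_def del: st.simps)
lemma st_5_6: "st 64 5 6 = [0, 0, 0, 0, 0, 56, 48, 48]" by (subst st_num) (simp_all add: st_5_5 step_def del: st.simps)
lemma st_5_7: "st 64 5 7 = [0, 0, 0, 0, 0, 24, 48, 32]" by (subst st_num) (simp_all add: st_5_6 step_def del: st.simps)
lemma st_5_8: "st 64 5 8 = [0, 0, 0, 0, 0, 56, 48, 48]" by (subst st_num) (simp_all add: st_5_7 step_def del: st.simps)
lemma st_5_9: "st 64 5 9 = [0, 0, 0, 0, 0, 24, 48, 32]" by (subst st_num) (simp_all add: st_5_8 step_def del: st.simps)
lemma st_5_10: "st 64 5 10 = [0, 0, 0, 0, 0, 56, 48, 48]" by (subst st_num) (simp_all add: st_5_9 step_def del: st.simps)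
lemma st_5_11: "st 64 5 11 = [0, 0, 0, 0, 0, 24, 48, 32]" by (subst st_num) (simp_all add: st_5_10 step_def del: st.simps)
lemma st_5_12: "st 64 5 12 = [0, 0, 0, 0, 0, 56, 48, 48]" by (subst st_num) (simp_all add: st_5_11 step_def del: st.simps)
lemma st_5_13: "st 64 5 13 = [0, 0, 0, 0, 0, 24, 48, 32]" by (subst st_num) (simp_all add: st_5_12 step_def del: st.simps)
lemma st_5_14: "st 64 5 14 = [0, 0, 0, 0, 0, 56, 48, 48]" by (subst st_num) (simp_all add: st_5_13 step_def del: st.simps)
lemma st_5_15: "st 64 5 15 = [0, 0, 0, 0, 0, 24, 48, 32]" by (subst st_num) (simp_all add: st_5_14 step_def del: st.simps)
lemma st_6_0: "st 64 6 0 = [0, 0, 0, 0, 0, 0, 16, 0]" by (simp add: fact_numeral)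
lemma st_6_1: "st 64 6 1 = [0, 0, 0, 0, 0, 0, 32, 48]" by (subst st_num) (simp_all add: st_6_0 step_def del: st.simps)
lemma st_6_2: "st 64 6 2 = [0, 0, 0, 0, 0, 0, 0, 48]" by (subst st_num) (simp_all add: st_6_1[unfolded One_nat_def] step_def del: st.simps)
lemma st_6_3: "st 64 6 3 = [0, 0, 0, 0, 0, 0, 0, 16]" by (subst st_num) (simp_all add: st_6_2 step_def del: st.simps)
lemma st_6_4: "st 64 6 4 = [0, 0, 0, 0, 0, 0, 0, 48]" by (subst st_num) (simp_all add: st_6_3 step_def del: st.simps)
lemma st_6_5: "st 64 6 5 = [0, 0, 0, 0, 0, 0, 0, 16]" by (subst st_num) (simp_all add: st_6_4 step_def del: st.simps)
lemma st_6_6: "st 64 6 6 = [0, 0, 0, 0, 0, 0, 0, 48]" by (subst st_num) (simp_all add: st_6_5 step_def del: st.simps)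
lemma st_6_7: "st 64 6 7 = [0, 0, 0, 0, 0, 0, 0, 16]" by (subst st_num) (simp_all add: st_6_6 step_def del: st.simps)
lemma st_6_8: "st 64 6 8 = [0, 0, 0, 0, 0, 0, 0, 48]" by (subst st_num) (simp_all add: st_6_7 step_def del: st.simps)
lemma st_6_9: "st 64 6 9 = [0, 0, 0, 0, 0, 0, 0, 16]" by (subst st_num) (simp_all add: st_6_8 step_def del: st.simps)
lemma st_6_10: "st 64 6 10 = [0, 0, 0, 0, 0, 0, 0, 48]" by (subst st_num) (simp_all add: st_6_9 step_def del: st.simps)
lemma st_6_11: "st 64 6 11 = [0, 0, 0, 0, 0, 0, 0, 16]" by (subst st_num) (simp_all add: st_6_10 step_def del: st.simps)
lemma st_6_12: "st 64 6 12 = [0, 0, 0, 0, 0, 0, 0, 48]" by (subst st_num) (simp_all add: st_6_11 step_def del: st.simps)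
lemma st_6_13: "st 64 6 13 = [0, 0, 0, 0, 0, 0, 0, 16]" by (subst st_num) (simp_all add: st_6_12 step_def del: st.simps)
lemma st_6_14: "st 64 6 14 = [0, 0, 0, 0, 0, 0, 0, 48]" by (subst st_num) (simp_all add: st_6_13 step_def del: st.simps)
lemma st_6_15: "st 64 6 15 = [0, 0, 0, 0, 0, 0, 0, 16]" by (subst st_num) (simp_all add: st_6_14 step_def del: st.simps)
lemma st_7_0: "st 64 7 0 = [0, 0, 0, 0, 0, 0, 0, 48]" by (simp add: fact_numeral)
lemma st_7_1: "st 64 7 1 = [0, 0, 0, 0, 0, 0, 0, 16]" by (subst st_num) (simp_all add: st_7_0 step_def del: st.simps)
lemma st_7_2: "st 64 7 2 = [0, 0, 0, 0, 0, 0, 0, 48]" by (subst st_num) (simp_all add: st_7_1[unfolded One_nat_def] step_def del: st.simps)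
lemma st_7_3: "st 64 7 3 = [0, 0, 0, 0, 0, 0, 0, 16]" by (subst st_num) (simp_all add: st_7_2 step_def del: st.simps)
lemma st_7_4: "st 64 7 4 = [0, 0, 0, 0, 0, 0, 0, 48]" by (subst st_num) (simp_all add: st_7_3 step_def del: st.simps)
lemma st_7_5: "st 64 7 5 = [0, 0, 0, 0, 0, 0, 0, 16]" by (subst st_num) (simp_all add: st_7_4 step_def del: st.simps)
lemma st_7_6: "st 64 7 6 = [0, 0, 0, 0, 0, 0, 0, 48]" by (subst st_num) (simp_all add: st_7_5 step_def del: st.simps)
lemma st_7_7: "st 64 7 7 = [0, 0, 0, 0, 0, 0, 0, 16]" by (subst st_num) (simp_all add: st_7_6 step_def del: st.simps)
lemma st_7_8: "st 64 7 8 = [0, 0, 0, 0, 0, 0, 0, 48]" by (subst st_num) (simp_all add: st_7_7 step_def del: st.simps)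
lemma st_7_9: "st 64 7 9 = [0, 0, 0, 0, 0, 0, 0, 16]" by (subst st_num) (simp_all add: st_7_8 step_def del: st.simps)
lemma st_7_10: "st 64 7 10 = [0, 0, 0, 0, 0, 0, 0, 48]" by (subst st_num) (simp_all add: st_7_9 step_def del: st.simps)
lemma st_7_11: "st 64 7 11 = [0, 0, 0, 0, 0, 0, 0, 16]" by (subst st_num) (simp_all add: st_7_10 step_def del: st.simps)
lemma st_7_12: "st 64 7 12 = [0, 0, 0, 0, 0, 0, 0, 48]" by (subst st_num) (simp_all add: st_7_11 step_def del: st.simps)
lemma st_7_13: "st 64 7 13 = [0, 0, 0, 0, 0, 0, 0, 16]" by (subst st_num) (simp_all add: st_7_12 step_def del: st.simps)
lemma st_7_14: "st 64 7 14 = [0, 0, 0, 0, 0, 0, 0, 48]" by (subst st_num) (simp_all add: st_7_13 step_def del: st.simps)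
lemma st_7_15: "st 64 7 15 = [0, 0, 0, 0, 0, 0, 0, 16]" by (subst st_num) (simp_all add: st_7_14 step_def del: st.simps)

definition G :: "nat \<Rightarrow> nat \<Rightarrow> nat \<Rightarrow> nat" where
  "G M r n = sum_list (st M r n) mod M"

definition Aa :: "nat \<Rightarrow> nat \<Rightarrow> nat \<Rightarrow> nat" where
  "Aa r n j = fact j * r_stirling r (n + r) j"

lemma Aa_0: "Aa r 0 j = (if j = r then fact r else 0)"
  unfolding Aa_def r_stirling_TT using TT_base[of "{1..r}" j] by simp

lemma Aa_j0: "r \<ge> 1 \<Longrightarrow> Aa r n 0 = 0"
  unfolding Aa_def r_stirling_TT using TT_zero[of "{1..n+r}" "{1..r}"] by simp

lemma Aa_Suc: "Aa r (Suc n) (Suc k) = Suc k * (Aa r n (Suc k) + Aa r n k)"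
proof -
  have e: "{1..Suc n + r} = insert (Suc (n + r)) {1..n+r}" by auto
  have "r_stirling r (Suc n + r) (Suc k) =
        r_stirling r (n + r) k + Suc k * r_stirling r (n + r) (Suc k)"
    unfolding r_stirling_TT e by (rule TT_rec) auto
  thus ?thesis unfolding Aa_def by (simp add: algebra_simps)
qed

lemma Aa_rec: "r \<ge> 1 \<Longrightarrow> Aa r (Suc n) j = j * (Aa r n j + Aa r n (j - 1))"
  by (cases j) (simp_all add: Aa_j0 Aa_Suc)

lemma Aa_below: "r \<ge> 1 \<Longrightarrow> j < r \<Longrightarrow> Aa r n j = 0"
  by (induction n arbitrary: j) (auto simp: Aa_0 Aa_rec)

lemma Aa_above: "r \<ge> 1 \<Longrightarrow> j > n + r \<Longrightarrow> Aa r n j = 0"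
  by (induction n arbitrary: j) (auto simp: Aa_0 Aa_rec)

lemma length_st: "length (st M r n) = 8"
  by (cases n) (simp_all add: step_def)

lemma lt8: "(j::nat) < 8 \<Longrightarrow> j = 0 \<or> j = 1 \<or> j = 2 \<or> j = 3 \<or> j = 4 \<or> j = 5 \<or> j = 6 \<or> j = 7"
  by arith

lemma step_nth: "j < 8 \<Longrightarrow> step M s ! j = j * (s!j + s!(j-1)) mod M"
  by (drule lt8) (elim disjE; simp add: step_def)

lemma st0_nth: "j < 8 \<Longrightarrow> st M r 0 ! j = (if j = r then fact r mod M else 0)"
  by (drule lt8) (elim disjE; simp)

lemma st_nth: "r \<ge> 1 \<Longrightarrow> j < 8 \<Longrightarrow> st M r n ! j = Aa r n j mod M"
proof (induction n arbitrary: j)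
  case 0 thus ?case by (simp add: Aa_0 st0_nth del: st.simps)
next
  case (Suc n)
  have "st M r (Suc n) ! j = j * (st M r n ! j + st M r n ! (j-1)) mod M"
    using Suc.prems by (simp add: step_nth)
  also have "\<dots> = j * (Aa r n j mod M + Aa r n (j-1) mod M) mod M"
    using Suc by simp
  also have "\<dots> = j * (Aa r n j + Aa r n (j-1)) mod M"
    by (metis mod_add_eq mod_mult_right_eq)
  also have "\<dots> = Aa r (Suc n) j mod M" using Aa_rec[OF Suc.prems(1)] by simp
  finally show ?case .
qed

lemma fubini_Aa: "r \<ge> 1 \<Longrightarrow> r_fubini n r = (\<Sum>j<n+r+1. Aa r n j)"
proof -
  assume r: "r \<ge> 1"
  have "r_fubini n r = (\<Sum>k=0..n. Aa r n (k + r))" unfolding r_fubini_def Aa_def by simp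
  also have "\<dots> = (\<Sum>j=r..n+r. Aa r n j)"
    using sum.shift_bounds_cl_nat_ivl[of "Aa r n" 0 r n] by simp
  also have "\<dots> = (\<Sum>j<n+r+1. Aa r n j)"
  proof -
    have "(\<Sum>j<n+r+1. Aa r n j) = sum (Aa r n) ({..<r} \<union> {r..n+r})" by (rule sum.cong) auto
    also have "\<dots> = (\<Sum>j<r. Aa r n j) + (\<Sum>j=r..n+r. Aa r n j)"
      by (rule sum.union_disjoint) auto
    finally have "(\<Sum>j<n+r+1. Aa r n j) = (\<Sum>j<r. Aa r n j) + (\<Sum>j=r..n+r. Aa r n j)" .
    thus ?thesis using Aa_below[OF r] by simp
  qed
  finally show ?thesis .
qed

lemma dvd_fact8: "j \<ge> 8 \<Longrightarrow> m \<le> 6 \<Longrightarrow> (2::nat)^m dvd fact j"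
proof -
  assume j: "j \<ge> 8" and m: "m \<le> 6"
  have "(2::nat)^m dvd 2^6" using le_imp_power_dvd[OF m, of "2::nat"] .
  also have "(2::nat)^6 dvd fact 8" by (simp add: fact_numeral)
  also have "fact 8 dvd (fact j :: nat)" using j by (rule fact_dvd)
  finally show ?thesis .
qed

lemma fubini_mod: "r \<ge> 1 \<Longrightarrow> m \<le> 6 \<Longrightarrow> r_fubini n r mod 2^m = (\<Sum>j<8. Aa r n j) mod 2^m"
proof -
  assume r: "r \<ge> 1" and m: "m \<le> 6"
  define L where "L = max (n+r+1) 8"
  have "r_fubini n r = (\<Sum>j<L. Aa r n j)"
  proof -
    have "(\<Sum>j<L. Aa r n j) = sum (Aa r n) ({..<n+r+1} \<union> {n+r+1..<L})" by (rule sum.cong) (auto simp: L_def)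
    also have "\<dots> = (\<Sum>j<n+r+1. Aa r n j) + (\<Sum>j\<in>{n+r+1..<L}. Aa r n j)"
      by (rule sum.union_disjoint) auto
    finally have "(\<Sum>j<L. Aa r n j) = (\<Sum>j<n+r+1. Aa r n j) + (\<Sum>j\<in>{n+r+1..<L}. Aa r n j)" .
    thus ?thesis using Aa_above[OF r] fubini_Aa[OF r] by simp
  qed
  also have "\<dots> = (\<Sum>j<8. Aa r n j) + (\<Sum>j\<in>{8..<L}. Aa r n j)"
  proof -
    have "(\<Sum>j<L. Aa r n j) = sum (Aa r n) ({..<8} \<union> {8..<L})" by (rule sum.cong) (auto simp: L_def)
    also have "\<dots> = (\<Sum>j<8. Aa r n j) + (\<Sum>j\<in>{8..<L}. Aa r n j)"
      by (rule sum.union_disjoint) auto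
    finally show ?thesis .
  qed
  finally have e: "r_fubini n r = (\<Sum>j<8. Aa r n j) + (\<Sum>j\<in>{8..<L}. Aa r n j)" .
  have "2^m dvd (\<Sum>j\<in>{8..<L}. Aa r n j)"
    by (rule dvd_sum) (auto simp: Aa_def intro: dvd_mult2 dvd_fact8[OF _ m])
  then obtain c where c: "(\<Sum>j\<in>{8..<L}. Aa r n j) = 2^m * c" by (rule dvdE)
  show ?thesis unfolding e c by (rule mod_mult_self2)
qed

lemma fubini_G: "r \<ge> 1 \<Longrightarrow> m \<le> 6 \<Longrightarrow> r_fubini n r mod 2^m = G (2^m) r n"
proof -
  assume r: "r \<ge> 1" and m: "m \<le> 6"
  have "r_fubini n r mod 2^m = (\<Sum>j<8. Aa r n j mod 2^m) mod 2^m"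
    using fubini_mod[OF r m] mod_sum_eq[of "\<lambda>j. Aa r n j" "2^m" "{..<8}"] by simp
  also have "(\<Sum>j<8. Aa r n j mod 2^m) = (\<Sum>j<8. st (2^m) r n ! j)"
    by (rule sum.cong) (simp_all add: st_nth[OF r])
  also have "\<dots> = sum_list (st (2^m) r n)"
    unfolding sum_list_sum_nth length_st lessThan_atLeast0 ..
  finally show ?thesis by (simp add: G_def)
qed

lemma per_2:
  assumes "n < 13" "m - 1 \<le> n" "3 \<le> m" "m \<le> 6"
  shows "sum_list (st 64 2 (n+2)) mod 2^m = sum_list (st 64 2 n) mod 2^m"
proof -
  have "m = 3 \<or> m = 4 \<or> m = 5 \<or> m = 6" using assms by arith
  moreover have "n = 2 \<or> n = 3 \<or> n = 4 \<or> n = 5 \<or> n = 6 \<or> n = 7 \<or> n = 8 \<or> n = 9 \<or> n = 10 \<or> n = 11 \<or> n = 12"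
    using assms by arith
  ultimately show ?thesis using assms(2) by (elim disjE; simp add: st_2_0 st_2_1 st_2_2 st_2_3 st_2_4 st_2_5 st_2_6 st_2_7 st_2_8 st_2_9 st_2_10 st_2_11 st_2_12 st_2_13 st_2_14 st_2_15 del: st.simps)
qed

lemma per13_2: "st 64 2 13 = st 64 2 5" by (simp only: st_2_13 st_2_5)

lemma per_3:
  assumes "n < 13" "m - 1 \<le> n" "3 \<le> m" "m \<le> 6"
  shows "sum_list (st 64 3 (n+2)) mod 2^m = sum_list (st 64 3 n) mod 2^m"
proof -
  have "m = 3 \<or> m = 4 \<or> m = 5 \<or> m = 6" using assms by arith
  moreover have "n = 2 \<or> n = 3 \<or> n = 4 \<or> n = 5 \<or> n = 6 \<or> n = 7 \<or> n = 8 \<or> n = 9 \<or> n = 10 \<or> n = 11 \<or> n = 12"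
    using assms by arith
  ultimately show ?thesis using assms(2) by (elim disjE; simp add: st_3_0 st_3_1 st_3_2 st_3_3 st_3_4 st_3_5 st_3_6 st_3_7 st_3_8 st_3_9 st_3_10 st_3_11 st_3_12 st_3_13 st_3_14 st_3_15 del: st.simps)
qed

lemma per13_3: "st 64 3 13 = st 64 3 5" by (simp only: st_3_13 st_3_5)

lemma per_4:
  assumes "n < 13" "m - 1 \<le> n" "3 \<le> m" "m \<le> 6"
  shows "sum_list (st 64 4 (n+2)) mod 2^m = sum_list (st 64 4 n) mod 2^m"
proof -
  have "m = 3 \<or> m = 4 \<or> m = 5 \<or> m = 6" using assms by arith
  moreover have "n = 2 \<or> n = 3 \<or> n = 4 \<or> n = 5 \<or> n = 6 \<or> n = 7 \<or> n = 8 \<or> n = 9 \<or> n = 10 \<or> n = 11 \<or> n = 12"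
    using assms by arith
  ultimately show ?thesis using assms(2) by (elim disjE; simp add: st_4_0 st_4_1 st_4_2 st_4_3 st_4_4 st_4_5 st_4_6 st_4_7 st_4_8 st_4_9 st_4_10 st_4_11 st_4_12 st_4_13 st_4_14 st_4_15 del: st.simps)
qed

lemma per13_4: "st 64 4 13 = st 64 4 5" by (simp only: st_4_13 st_4_5)

lemma per_5:
  assumes "n < 13" "m - 1 \<le> n" "3 \<le> m" "m \<le> 6"
  shows "sum_list (st 64 5 (n+2)) mod 2^m = sum_list (st 64 5 n) mod 2^m"
proof -
  have "m = 3 \<or> m = 4 \<or> m = 5 \<or> m = 6" using assms by arith
  moreover have "n = 2 \<or> n = 3 \<or> n = 4 \<or> n = 5 \<or> n = 6 \<or> n = 7 \<or> n = 8 \<or> n = 9 \<or> n = 10 \<or> n = 11 \<or> n = 12"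
    using assms by arith
  ultimately show ?thesis using assms(2) by (elim disjE; simp add: st_5_0 st_5_1 st_5_2 st_5_3 st_5_4 st_5_5 st_5_6 st_5_7 st_5_8 st_5_9 st_5_10 st_5_11 st_5_12 st_5_13 st_5_14 st_5_15 del: st.simps)
qed

lemma per13_5: "st 64 5 13 = st 64 5 5" by (simp only: st_5_13 st_5_5)

lemma per_6:
  assumes "n < 13" "m - 1 \<le> n" "3 \<le> m" "m \<le> 6"
  shows "sum_list (st 64 6 (n+2)) mod 2^m = sum_list (st 64 6 n) mod 2^m"
proof -
  have "m = 3 \<or> m = 4 \<or> m = 5 \<or> m = 6" using assms by arith
  moreover have "n = 2 \<or> n = 3 \<or> n = 4 \<or> n = 5 \<or> n = 6 \<or> n = 7 \<or> n = 8 \<or> n = 9 \<or> n = 10 \<or> n = 11 \<or> n = 12"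
    using assms by arith
  ultimately show ?thesis using assms(2) by (elim disjE; simp add: st_6_0 st_6_1 st_6_2 st_6_3 st_6_4 st_6_5 st_6_6 st_6_7 st_6_8 st_6_9 st_6_10 st_6_11 st_6_12 st_6_13 st_6_14 st_6_15 del: st.simps)
qed

lemma per13_6: "st 64 6 13 = st 64 6 5" by (simp only: st_6_13 st_6_5)

lemma per_7:
  assumes "n < 13" "m - 1 \<le> n" "3 \<le> m" "m \<le> 6"
  shows "sum_list (st 64 7 (n+2)) mod 2^m = sum_list (st 64 7 n) mod 2^m"
proof -
  have "m = 3 \<or> m = 4 \<or> m = 5 \<or> m = 6" using assms by arith
  moreover have "n = 2 \<or> n = 3 \<or> n = 4 \<or> n = 5 \<or> n = 6 \<or> n = 7 \<or> n = 8 \<or> n = 9 \<or> n = 10 \<or> n = 11 \<or> n = 12"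
    using assms by arith
  ultimately show ?thesis using assms(2) by (elim disjE; simp add: st_7_0 st_7_1 st_7_2 st_7_3 st_7_4 st_7_5 st_7_6 st_7_7 st_7_8 st_7_9 st_7_10 st_7_11 st_7_12 st_7_13 st_7_14 st_7_15 del: st.simps)
qed

lemma per13_7: "st 64 7 13 = st 64 7 5" by (simp only: st_7_13 st_7_5)

lemma per_tab:
  assumes "2 \<le> r" "r \<le> 7" "n < 13" "m - 1 \<le> n" "3 \<le> m" "m \<le> 6"
  shows "sum_list (st 64 r (n+2)) mod 2^m = sum_list (st 64 r n) mod 2^m
       \<and> st 64 r 13 = st 64 r 5"
proof -
  have "r = 2 \<or> r = 3 \<or> r = 4 \<or> r = 5 \<or> r = 6 \<or> r = 7" using assms by arith
  thus ?thesis using assms(3-)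
    by (elim disjE) (simp_all only: per_2 per_3 per_4 per_5 per_6 per_7
        per13_2 per13_3 per13_4 per13_5 per13_6 per13_7 simp_thms)
qed

lemma period8:
  assumes "st M r 13 = st M r 5"
  shows "st M r (5 + k + 8) = st M r (5 + k)"
proof (induction k)
  case 0 thus ?case using assms by simp
next
  case (Suc k)
  have "st M r (5 + Suc k + 8) = step M (st M r (5 + k + 8))"
    by (metis add_Suc add_Suc_right st.simps(2))
  also have "\<dots> = step M (st M r (5 + k))" using Suc by simp
  also have "\<dots> = st M r (5 + Suc k)" by (metis add_Suc_right st.simps(2))
  finally show ?case .
qed

theorem theorem4p6:
  fixes r m n :: nat
  assumes "r \<ge> 2" and "3 \<le> m" and "m \<le> 6" and "n \<ge> m - 1"
  shows "r_fubini (n + 2) r mod 2 ^ m = r_fubini n r mod 2 ^ m"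
proof (cases "r \<le> 7")
  case False
  have r1: "r \<ge> 1" using assms by simp
  have z: "(\<Sum>j<8. Aa r k j) = 0" for k using False Aa_below[OF r1] by simp
  show ?thesis using fubini_mod[OF r1 assms(3)] z by simp
next
  case True
  have r1: "r \<ge> 1" using assms by simp
  have dv: "(2::nat)^m dvd 2^6" using le_imp_power_dvd[OF assms(3), of "2::nat"] .
  have F: "r_fubini k r mod 2^m = sum_list (st 64 r k) mod 2^m" for k
  proof -
    have "r_fubini k r mod 2^6 = sum_list (st (2^6) r k) mod 2^6"
      using fubini_G[OF r1, of 6 k] by (simp add: G_def)
    hence "r_fubini k r mod 2^6 mod 2^m = sum_list (st 64 r k) mod 2^6 mod 2^m" by simp
    thus ?thesis using dv by (simp add: mod_mod_cancel)
  qed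
  have p13: "st 64 r 13 = st 64 r 5" using per_tab[OF assms(1) True, of 5 m] assms(2,3) by simp
  have main: "\<forall>n. m - 1 \<le> n \<longrightarrow> sum_list (st 64 r (n+2)) mod 2^m = sum_list (st 64 r n) mod 2^m"
  proof (intro allI)
    fix n show "m - 1 \<le> n \<longrightarrow> sum_list (st 64 r (n+2)) mod 2^m = sum_list (st 64 r n) mod 2^m"
    proof (induction n rule: less_induct)
      case (less n)
      show ?case
      proof (cases "n < 13")
        case True thus ?thesis using per_tab[OF assms(1) \<open>r \<le> 7\<close> True _ assms(2,3)] by blast
      next
        case False
        define k where "k = n - 13"
        have n: "n = 5 + k + 8" using False by (simp add: k_def)
        have n2: "n + 2 = 5 + (k + 2) + 8" using n by simp
        have e1: "st 64 r n = st 64 r (n - 8)" using period8[OF p13, of k] n by simp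
        have e2: "st 64 r (n + 2) = st 64 r (n - 8 + 2)"
          using period8[OF p13, of "k+2"] n n2 by simp
        have "m - 1 \<le> n - 8" using n assms(3) by simp
        hence "sum_list (st 64 r (n - 8 + 2)) mod 2^m = sum_list (st 64 r (n - 8)) mod 2^m"
          using less.IH[of "n - 8"] n by simp
        thus ?thesis using e1 e2 by simp
      qed
    qed
  qed
  show ?thesis using main assms(4) F by simp
qed

end
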